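(* Let $g$ be a symplectic potential on $P$ with $y=\partial g/\partial x$, $w_j=e^{y_j+i\theta_j}$, and $X_g=-\sum_jy_j\partial_{\theta_j}$ its Hamiltonian vector field on $\check X_P$. Then for every $m\in\mathbb Z^n$ the series $e^{iX_g}e^{im\cdot\theta}=\sum_{k\ge0}\frac{i^k}{k!}X_g^k\,e^{im\cdot\theta}$ converges and equals $w^m=w_1^{m_1}\cdots w_n^{m_n}$, and the time-$i$ flow $e^{iX_g}$ induces an algebra isomorphism from the algebra $\mathcal A$ generated by the characters $e^{im\cdot\theta}$, $m\in\mathbb Z^n$, of $\mathbb T^n$ onto the algebra generated by the $I_g$-monomial (meromorphic) functions $w^m$, $m\in\mathbb Z^n$, on $(X_P,I_g)$, sending $e^{im\cdot\theta}\mapsto w^m$.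
   Context: Let $P=\{x:\ell_j(x)=\langle\nu_j,x\rangle+\lambda_j\ge0\}$ be a Delzant polytope with interior $\check P$, $(X_P,\omega)$ the associated compact symplectic toric manifold with moment map $\mu$ and action-angle coordinates $(x,\theta)$ on $\check X_P=\mu^{-1}(\check P)\cong\check P\times\mathbb T^n$, $\omega=\sum dx^j\wedge d\theta_j$. A symplectic potential is $g=\frac12\sum\ell_j\log\ell_j+\varphi$, $\varphi\in C^\infty(P)$, with positive definite Hessian on $\check P$ and $\det H_g=(\alpha\prod\ell_j)^{-1}$ for a smooth positive $\alpha$ on $P$; it determines a toric complex structure $I_g$ on $X_P$ for which $(\check X_P,I_g)\cong(\mathbb C^* )^n$ via $(x,\theta)\mapsto w=e^{y+i\theta}$, $y=\partial g/\partial x$. *)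

theory Defs
  imports "HOL-Analysis.Analysis"
begin

definition aff :: "(nat \<Rightarrow> real^'n) \<Rightarrow> (nat \<Rightarrow> real) \<Rightarrow> nat \<Rightarrow> real^'n \<Rightarrow> real" where
  "aff nu lam j x = nu j \<bullet> x + lam j"

definition polyP :: "(nat \<Rightarrow> real^'n) \<Rightarrow> (nat \<Rightarrow> real) \<Rightarrow> nat \<Rightarrow> (real^'n) set" where
  "polyP nu lam d = {x. \<forall>j<d. aff nu lam j x \<ge> 0}"

text \<open>Delzant polytope: bounded with nonempty interior, integral normals, every
  inequality defines a facet (irredundant presentation), and at every vertex
  (point whose active normals span R^n) exactly n facets meet and their normals
  form a Z-basis of Z^n.\<close>

definition delzant :: "(nat \<Rightarrow> real^'n) \<Rightarrow> (nat \<Rightarrow> real) \<Rightarrow> nat \<Rightarrow> bool" where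
  "delzant nu lam d \<longleftrightarrow>
     bounded (polyP nu lam d) \<and> interior (polyP nu lam d) \<noteq> {} \<and>
     (\<forall>j<d. \<forall>k. nu j $ k \<in> \<int>) \<and>
     (\<forall>j<d. \<exists>x\<in>polyP nu lam d. aff nu lam j x = 0 \<and>
              (\<forall>k<d. k \<noteq> j \<longrightarrow> aff nu lam k x > 0)) \<and>
     (\<forall>v\<in>polyP nu lam d.
        let F = {j. j < d \<and> aff nu lam j v = 0} in
        span (nu ` F) = UNIV \<longrightarrow>
          card F = CARD('n) \<and>
          (\<forall>z::real^'n. (\<forall>k. z $ k \<in> \<int>) \<longrightarrow>
              (\<exists>c::nat \<Rightarrow> int. z = (\<Sum>j\<in>F. of_int (c j) *\<^sub>R nu j))))"

definition pd :: "'n::finite \<Rightarrow> (real^'n \<Rightarrow> real) \<Rightarrow> real^'n \<Rightarrow> real" where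
  "pd i f x = deriv (\<lambda>t. f (x + t *\<^sub>R axis i 1)) 0"

definition smooth_on :: "(real^'n::finite) set \<Rightarrow> (real^'n \<Rightarrow> real) \<Rightarrow> bool" where
  "smooth_on U f \<longleftrightarrow>
     (\<forall>is::'n list. continuous_on U (foldr pd is f) \<and>
        (\<forall>i. \<forall>x\<in>U. (\<lambda>t. foldr pd is f (x + t *\<^sub>R axis i 1)) differentiable (at 0)))"

definition hess :: "(real^'n::finite \<Rightarrow> real) \<Rightarrow> real^'n \<Rightarrow> real^'n^'n" where
  "hess g x = (\<chi> i j. pd i (pd j g) x)"

definition symplectic_potential ::
  "(nat \<Rightarrow> real^'n::finite) \<Rightarrow> (nat \<Rightarrow> real) \<Rightarrow> nat \<Rightarrow> (real^'n \<Rightarrow> real) \<Rightarrow> bool" where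
  "symplectic_potential nu lam d g \<longleftrightarrow>
     (\<exists>\<phi> \<alpha> U V. open U \<and> polyP nu lam d \<subseteq> U \<and> smooth_on U \<phi> \<and>
        open V \<and> polyP nu lam d \<subseteq> V \<and> smooth_on V \<alpha> \<and>
        (\<forall>x\<in>polyP nu lam d. \<alpha> x > 0) \<and>
        (\<forall>x\<in>interior (polyP nu lam d).
           g x = (1/2) * (\<Sum>j<d. aff nu lam j x * ln (aff nu lam j x)) + \<phi> x) \<and>
        (\<forall>x\<in>interior (polyP nu lam d).
           (\<forall>v. v \<noteq> 0 \<longrightarrow> v \<bullet> (hess g x *v v) > 0) \<and>
           det (hess g x) = 1 / (\<alpha> x * (\<Prod>j<d. aff nu lam j x))))"

text \<open>A point of the open dense subset is a pair (x, theta) with x in the interior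
  of P and theta in R^n (angles; functions are 2pi-periodic in theta).\<close>

definition chr :: "int^'n::finite \<Rightarrow> (real^'n) \<times> (real^'n) \<Rightarrow> complex" where
  "chr m = (\<lambda>(x, \<theta>). exp (\<i> * of_real (\<Sum>j\<in>UNIV. of_int (m $ j) * \<theta> $ j)))"

definition wcoord :: "(real^'n::finite \<Rightarrow> real^'n) \<Rightarrow> 'n \<Rightarrow> (real^'n) \<times> (real^'n) \<Rightarrow> complex" where
  "wcoord y j = (\<lambda>(x, \<theta>). exp (of_real (y x $ j) + \<i> * of_real (\<theta> $ j)))"

definition monom :: "(real^'n::finite \<Rightarrow> real^'n) \<Rightarrow> int^'n \<Rightarrow> (real^'n) \<times> (real^'n) \<Rightarrow> complex" where
  "monom y m = (\<lambda>p. \<Prod>j\<in>UNIV. (wcoord y j p) powi (m $ j))"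

definition dtheta :: "'n::finite \<Rightarrow> ((real^'n) \<times> (real^'n) \<Rightarrow> complex) \<Rightarrow> (real^'n) \<times> (real^'n) \<Rightarrow> complex" where
  "dtheta j f = (\<lambda>(x, \<theta>). vector_derivative (\<lambda>t. f (x, \<theta> + t *\<^sub>R axis j 1)) (at 0))"

definition Xham :: "(real^'n::finite \<Rightarrow> real^'n) \<Rightarrow> ((real^'n) \<times> (real^'n) \<Rightarrow> complex) \<Rightarrow> (real^'n) \<times> (real^'n) \<Rightarrow> complex" where
  "Xham y f = (\<lambda>(x, \<theta>). - (\<Sum>j\<in>UNIV. of_real (y x $ j) * dtheta j f (x, \<theta>)))"

definition expiX_term :: "(real^'n::finite \<Rightarrow> real^'n) \<Rightarrow> ((real^'n) \<times> (real^'n) \<Rightarrow> complex) \<Rightarrow> (real^'n) \<times> (real^'n) \<Rightarrow> nat \<Rightarrow> complex" where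
  "expiX_term y f p k = (\<i> ^ k / of_nat (fact k)) * ((Xham y ^^ k) f) p"

definition expiX :: "(real^'n::finite \<Rightarrow> real^'n) \<Rightarrow> ((real^'n) \<times> (real^'n) \<Rightarrow> complex) \<Rightarrow> (real^'n) \<times> (real^'n) \<Rightarrow> complex" where
  "expiX y f p = (\<Sum>k. expiX_term y f p k)"

inductive_set alg_gen :: "('a \<Rightarrow> complex) set \<Rightarrow> ('a \<Rightarrow> complex) set" for G where
  gen: "f \<in> G \<Longrightarrow> f \<in> alg_gen G"
| one: "(\<lambda>_. 1) \<in> alg_gen G"
| add: "f \<in> alg_gen G \<Longrightarrow> h \<in> alg_gen G \<Longrightarrow> (\<lambda>p. f p + h p) \<in> alg_gen G"
| smult: "f \<in> alg_gen G \<Longrightarrow> (\<lambda>p. c * f p) \<in> alg_gen G"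
| mult: "f \<in> alg_gen G \<Longrightarrow> h \<in> alg_gen G \<Longrightarrow> (\<lambda>p. f p * h p) \<in> alg_gen G"

text \<open>Restriction of a function to a domain D (zero outside), used to identify
  functions on the open dense subset interior(P) x T^n.\<close>

definition restr :: "'a set \<Rightarrow> ('a \<Rightarrow> complex) \<Rightarrow> 'a \<Rightarrow> complex" where
  "restr D f = (\<lambda>p. if p \<in> D then f p else 0)"

end

theory Submission
  imports Defs
begin


lemma chr_shift:
  "chr m (x, \<theta> + t *\<^sub>R axis j 1) = chr m (x,\<theta>) * exp (t *\<^sub>R (\<i> * of_int (m $ j)))"
proof -
  have "(\<Sum>k\<in>UNIV. of_int (m $ k) * (\<theta> + t *\<^sub>R axis j 1) $ k) = (\<Sum>k\<in>UNIV. of_int (m $ k) * \<theta> $ k) + t * of_int (m $ j)"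
  proof -
    have "(\<Sum>k\<in>UNIV. of_int (m $ k) * (\<theta> + t *\<^sub>R axis j 1) $ k) = (\<Sum>k\<in>UNIV. of_int (m $ k) * \<theta> $ k + (if k = j then t * of_int (m $ j) else 0))"
      by (rule sum.cong) (auto simp: axis_def algebra_simps)
    also have "\<dots> = (\<Sum>k\<in>UNIV. of_int (m $ k) * \<theta> $ k) + t * of_int (m $ j)"
      by (simp add: sum.distrib)
    finally show ?thesis .
  qed
  then have "chr m (x, \<theta> + t *\<^sub>R axis j 1) = exp (\<i> * of_real (\<Sum>k\<in>UNIV. of_int (m $ k) * \<theta> $ k) + \<i> * of_real (t * of_int (m $ j)))"
    unfolding chr_def by (simp only: case_prod_conv distrib_left of_real_add)
  then show ?thesis unfolding chr_def
    by (simp add: exp_add scaleR_conv_of_real mult_ac)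
qed

lemma dtheta_chr: "dtheta j (chr m) (x,\<theta>) = \<i> * of_int (m $ j) * chr m (x,\<theta>)"
proof -
  have "((\<lambda>t. chr m (x,\<theta>) * exp (t *\<^sub>R (\<i> * of_int (m $ j)))) has_vector_derivative
          chr m (x,\<theta>) * ((\<i> * of_int (m $ j)) * exp (0 *\<^sub>R (\<i> * of_int (m $ j))))) (at 0)"
    by (intro has_vector_derivative_mult_right exp_scaleR_has_vector_derivative_left)
  then show ?thesis unfolding dtheta_def chr_shift
    by (simp add: vector_derivative_at mult.commute mult.left_commute)
qed

lemma monom_eq: "monom y m (x,\<theta>) = exp (of_real (\<Sum>j\<in>UNIV. of_int (m $ j) * y x $ j)) * chr m (x,\<theta>)"
  unfolding monom_def wcoord_def chr_def
  by (simp add: exp_power_int exp_sum[symmetric] exp_add[symmetric] sum.distrib algebra_simps sum_distrib_left)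



definition lin :: "(int^'n::finite) set \<Rightarrow> (int^'n \<Rightarrow> real^'n \<Rightarrow> complex) \<Rightarrow> (real^'n) \<times> (real^'n) \<Rightarrow> complex" where
  "lin S a = (\<lambda>p. \<Sum>m\<in>S. a m (fst p) * chr m p)"

definition sy :: "(real^'n::finite \<Rightarrow> real^'n) \<Rightarrow> int^'n \<Rightarrow> real^'n \<Rightarrow> real" where
  "sy y m x = (\<Sum>j\<in>UNIV. of_int (m $ j) * y x $ j)"

lemma dtheta_lin:
  assumes "finite S"
  shows "dtheta j (lin S a) (x,\<theta>) = (\<Sum>m\<in>S. a m x * (\<i> * of_int (m $ j) * chr m (x,\<theta>)))"
proof -
  have "((\<lambda>t. \<Sum>m\<in>S. a m x * (chr m (x,\<theta>) * exp (t *\<^sub>R (\<i> * of_int (m $ j))))) has_vector_derivative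
          (\<Sum>m\<in>S. a m x * (chr m (x,\<theta>) * ((\<i> * of_int (m $ j)) * exp (0 *\<^sub>R (\<i> * of_int (m $ j))))))) (at 0)"
    by (intro has_vector_derivative_sum has_vector_derivative_mult_right exp_scaleR_has_vector_derivative_left)
  then show ?thesis unfolding dtheta_def lin_def
    by (simp add: chr_shift vector_derivative_at mult.commute mult.left_commute)
qed

lemma Xham_lin:
  fixes y :: "real^'n::finite \<Rightarrow> real^'n"
  assumes "finite S"
  shows "Xham y (lin S a) = lin S (\<lambda>m x. a m x * (- \<i> * of_real (sy y m x)))"
proof (rule ext, clarify)
  fix x \<theta> :: "real^'n"
  have "Xham y (lin S a) (x,\<theta>) = - (\<Sum>j\<in>UNIV. \<Sum>m\<in>S. of_real (y x $ j) * (a m x * (\<i> * of_int (m $ j) * chr m (x,\<theta>))))"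
    unfolding Xham_def by (simp add: dtheta_lin[OF assms] sum_distrib_left)
  also have "\<dots> = (\<Sum>m\<in>S. a m x * (- \<i> * of_real (sy y m x)) * chr m (x,\<theta>))"
    unfolding sy_def
    by (subst sum.swap) (simp add: sum_distrib_left sum_distrib_right sum_negf[symmetric] mult_ac)
  finally show "Xham y (lin S a) (x,\<theta>) = lin S (\<lambda>m x. a m x * (- \<i> * of_real (sy y m x))) (x,\<theta>)"
    by (simp add: lin_def)
qed

lemma Xham_pow_lin:
  assumes "finite S"
  shows "(Xham y ^^ k) (lin S a) = lin S (\<lambda>m x. a m x * (- \<i> * of_real (sy y m x)) ^ k)"
proof (induction k)
  case 0 then show ?case by simp
next
  case (Suc k)
  show ?case by (simp add: Suc Xham_lin[OF assms] mult_ac)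
qed

lemma expiX_term_lin:
  assumes "finite S"
  shows "expiX_term y (lin S a) (x,\<theta>) k = (\<Sum>m\<in>S. (a m x * chr m (x,\<theta>)) * (of_real (sy y m x) ^ k /\<^sub>R fact k))"
proof -
  have e: "\<i> ^ k * (- (\<i> * z)) ^ k = z ^ k" for z :: complex
    by (simp add: power_mult_distrib[symmetric] mult.assoc[symmetric])
  show ?thesis
    unfolding expiX_term_def Xham_pow_lin[OF assms]
    apply (simp add: lin_def sum_distrib_left scaleR_conv_of_real)
    apply (rule sum.cong, rule refl)
    subgoal for m
      using e[of "of_real (sy y m x)"]
      by (simp add: divide_inverse mult_ac)
    done
qed

lemma expiX_lin:
  assumes "finite S"
  shows "(\<lambda>k. expiX_term y (lin S a) p k) sums (\<Sum>m\<in>S. a m (fst p) * monom y m p)"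
proof -
  obtain x \<theta> where p: "p = (x,\<theta>)" by (cases p)
  have "(\<lambda>k. \<Sum>m\<in>S. (a m x * chr m (x,\<theta>)) * (of_real (sy y m x) ^ k /\<^sub>R fact k)) sums
        (\<Sum>m\<in>S. (a m x * chr m (x,\<theta>)) * exp (of_real (sy y m x)))"
    by (intro sums_sum sums_mult exp_converges)
  moreover have "monom y m (x,\<theta>) = exp (of_real (sy y m x)) * chr m (x,\<theta>)" for m
    by (simp add: monom_eq sy_def)
  ultimately show ?thesis unfolding p
    by (simp only: expiX_term_lin[OF assms] fst_conv mult_ac)
qed



definition gsum :: "('m \<Rightarrow> 'p \<Rightarrow> complex) \<Rightarrow> 'm set \<Rightarrow> ('m \<Rightarrow> complex) \<Rightarrow> 'p \<Rightarrow> complex" where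
  "gsum X S c = (\<lambda>p. \<Sum>m\<in>S. c m * X m p)"

definition addc :: "'m set \<Rightarrow> ('m \<Rightarrow> complex) \<Rightarrow> 'm set \<Rightarrow> ('m \<Rightarrow> complex) \<Rightarrow> 'm \<Rightarrow> complex" where
  "addc S1 c1 S2 c2 = (\<lambda>m. (if m \<in> S1 then c1 m else 0) + (if m \<in> S2 then c2 m else 0))"

definition mulc :: "'m::plus set \<Rightarrow> ('m \<Rightarrow> complex) \<Rightarrow> 'm set \<Rightarrow> ('m \<Rightarrow> complex) \<Rightarrow> 'm \<Rightarrow> complex" where
  "mulc S1 c1 S2 c2 = (\<lambda>m. \<Sum>q\<in>{q\<in>S1 \<times> S2. fst q + snd q = m}. c1 (fst q) * c2 (snd q))"

lemma gsum_extend: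
  assumes "finite T" "S \<subseteq> T"
  shows "gsum X S c p = (\<Sum>m\<in>T. (if m \<in> S then c m else 0) * X m p)"
proof -
  have "(\<Sum>m\<in>T. (if m \<in> S then c m else 0) * X m p) = (\<Sum>m\<in>T. if m \<in> S then c m * X m p else 0)"
    by (rule sum.cong) auto
  also have "\<dots> = (\<Sum>m\<in>T \<inter> S. c m * X m p)"
    using assms by (simp add: sum.inter_restrict)
  also have "T \<inter> S = S" using assms by auto
  finally show ?thesis by (simp add: gsum_def)
qed

lemma gsum_add:
  assumes "finite S1" "finite S2"
  shows "(\<lambda>p. gsum X S1 c1 p + gsum X S2 c2 p) = gsum X (S1 \<union> S2) (addc S1 c1 S2 c2)"
proof
  fix p
  have "gsum X S1 c1 p + gsum X S2 c2 p =
     (\<Sum>m\<in>S1\<union>S2. (if m \<in> S1 then c1 m else 0) * X m p) + (\<Sum>m\<in>S1\<union>S2. (if m \<in> S2 then c2 m else 0) * X m p)"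
    using assms by (simp add: gsum_extend[of "S1 \<union> S2"])
  then show "gsum X S1 c1 p + gsum X S2 c2 p = gsum X (S1 \<union> S2) (addc S1 c1 S2 c2) p"
    by (simp add: gsum_def addc_def sum.distrib[symmetric] distrib_right)
qed

lemma gsum_smult:
  "(\<lambda>p. c * gsum X S c1 p) = gsum X S (\<lambda>m. c * c1 m)"
  by (simp add: gsum_def sum_distrib_left mult_ac)

lemma gsum_mult:
  assumes "finite S1" "finite S2" and hom: "\<And>a b p. X (a + b) p = X a p * X b p"
  shows "(\<lambda>p. gsum X S1 c1 p * gsum X S2 c2 p) = gsum X ((\<lambda>q. fst q + snd q) ` (S1 \<times> S2)) (mulc S1 c1 S2 c2)"
proof
  fix p
  have fin: "finite (S1 \<times> S2)" using assms by simp
  have "gsum X S1 c1 p * gsum X S2 c2 p = (\<Sum>q\<in>S1 \<times> S2. c1 (fst q) * c2 (snd q) * X (fst q + snd q) p)"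
    by (simp add: gsum_def sum_product sum.cartesian_product hom mult_ac case_prod_beta)
  also have "\<dots> = (\<Sum>m\<in>(\<lambda>q. fst q + snd q) ` (S1 \<times> S2). \<Sum>q\<in>{q\<in>S1 \<times> S2. fst q + snd q = m}. c1 (fst q) * c2 (snd q) * X (fst q + snd q) p)"
    by (rule sum.image_gen[OF fin])
  also have "\<dots> = (\<Sum>m\<in>(\<lambda>q. fst q + snd q) ` (S1 \<times> S2). mulc S1 c1 S2 c2 m * X m p)"
    unfolding mulc_def sum_distrib_right by (intro sum.cong refl) auto
  finally show "gsum X S1 c1 p * gsum X S2 c2 p = gsum X ((\<lambda>q. fst q + snd q) ` (S1 \<times> S2)) (mulc S1 c1 S2 c2) p"
    by (simp add: gsum_def)
qed

lemma gsum_in_alg: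
  assumes "finite S" "\<And>m. m \<in> S \<Longrightarrow> X m \<in> G"
  shows "gsum X S c \<in> alg_gen G"
  using assms
proof (induction S rule: finite_induct)
  case empty
  have "(\<lambda>p. 0 * (\<lambda>_. 1) p) \<in> alg_gen G" by (rule alg_gen.smult[OF alg_gen.one])
  then show ?case by (simp add: gsum_def)
next
  case (insert m S)
  have "(\<lambda>p. (\<lambda>p. c m * X m p) p + gsum X S c p) \<in> alg_gen G"
    using insert by (intro alg_gen.add[OF alg_gen.smult[OF alg_gen.gen]]) auto
  then show ?case using insert by (simp add: gsum_def)
qed

lemma chr_add: "chr (a + b) p = chr a p * chr b p"
  by (cases p) (simp add: chr_def distrib_right sum.distrib exp_add algebra_simps)

lemma chr_zero: "chr 0 p = 1"
  by (cases p) (simp add: chr_def)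

lemma monom_add: "monom y (a + b) p = monom y a p * monom y b p"
  by (cases p) (simp add: monom_eq chr_add distrib_right sum.distrib exp_add algebra_simps)

lemma monom_zero: "monom y 0 p = 1"
  by (cases p) (simp add: monom_eq chr_zero)

lemma alg_rep:
  assumes "f \<in> alg_gen (range chr)"
  shows "\<exists>S c. finite S \<and> f = gsum chr S c"
  using assms
proof (induction rule: alg_gen.induct)
  case (gen f)
  then obtain m where "f = chr m" by auto
  then have "f = gsum chr {m} (\<lambda>_. 1)" by (simp add: gsum_def)
  then show ?case by blast
next
  case one
  have "(\<lambda>_. 1) = gsum chr {0} (\<lambda>_. 1)" by (simp add: gsum_def chr_zero)
  then show ?case by blast
next
  case (add f h)
  then obtain S1 c1 S2 c2 where "finite S1" "f = gsum chr S1 c1" "finite S2" "h = gsum chr S2 c2" by blast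
  then show ?case using gsum_add[of S1 S2 chr c1 c2] by (intro exI[of _ "S1 \<union> S2"]) auto
next
  case (smult f c)
  then obtain S1 c1 where "finite S1" "f = gsum chr S1 c1" by blast
  then show ?case using gsum_smult[of c chr S1 c1] by blast
next
  case (mult f h)
  then obtain S1 c1 S2 c2 where "finite S1" "f = gsum chr S1 c1" "finite S2" "h = gsum chr S2 c2" by blast
  then show ?case using gsum_mult[of S1 S2 chr c1 c2, OF _ _ chr_add]
    by (intro exI[of _ "(\<lambda>q. fst q + snd q) ` (S1 \<times> S2)"]) auto
qed

lemma expiX_gsum:
  assumes "finite S"
  shows "(\<lambda>k. expiX_term y (gsum chr S c) p k) sums gsum (monom y) S c p"
proof -
  have "gsum chr S c = lin S (\<lambda>m _. c m)" by (simp add: gsum_def lin_def)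
  then show ?thesis using expiX_lin[OF assms, of y "\<lambda>m _. c m" p] by (simp add: gsum_def)
qed

lemma expiX_gsum_eq:
  assumes "finite S"
  shows "expiX y (gsum chr S c) = gsum (monom y) S c"
  using expiX_gsum[OF assms] by (auto simp: expiX_def sums_iff)



lemma chr_indep: "chr m (x, \<theta>) = chr m (x', \<theta>)"
  by (simp add: chr_def)

lemma chr_nz: "chr m p \<noteq> 0"
  by (cases p) (simp add: chr_def)

lemma chr_sep:
  fixes m m0 :: "int^'n::finite"
  assumes "m \<noteq> m0"
  shows "\<exists>\<phi>. chr m (x,\<phi>) \<noteq> chr m0 (x,\<phi>)"
proof -
  obtain j where j: "m $ j \<noteq> m0 $ j" using assms by (metis vec_eq_iff)
  define k where "k = m - m0"
  have kj: "k $ j \<noteq> 0" using j by (simp add: k_def)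
  define t where "t = pi / of_int (k $ j)"
  have c0: "chr k (x,0) = 1" by (simp add: chr_def)
  have "chr k (x, 0 + t *\<^sub>R axis j 1) = exp (t *\<^sub>R (\<i> * of_int (k $ j)))"
    using chr_shift[of k x 0 t j] by (simp only: c0 mult_1)
  also have "t *\<^sub>R (\<i> * of_int (k $ j)) = \<i> * of_real pi"
    using kj by (simp add: t_def scaleR_conv_of_real field_simps)
  also have "exp (\<i> * of_real pi) = -1" by (simp add: exp_Euler)
  finally have k1: "chr k (x, t *\<^sub>R axis j 1) = -1" by simp
  have "m = k + m0" by (simp add: k_def)
  then have "chr m (x, t *\<^sub>R axis j 1) = - chr m0 (x, t *\<^sub>R axis j 1)"
    by (simp add: chr_add k1)
  then show ?thesis using chr_nz[of m0 "(x, t *\<^sub>R axis j 1)"]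
    by (intro exI[of _ "t *\<^sub>R axis j 1"]) (auto simp: eq_neg_iff_add_eq_0)
qed

lemma chr_theta_add: "chr m (x, \<theta> + \<phi>) = chr m (x,\<theta>) * chr m (x,\<phi>)"
  by (simp add: chr_def distrib_left sum.distrib exp_add algebra_simps)

lemma fourier_unique:
  fixes S :: "(int^'n::finite) set"
  assumes "finite S" "\<forall>\<theta>. (\<Sum>m\<in>S. c m * chr m (x,\<theta>)) = 0"
  shows "\<forall>m\<in>S. c m = 0"
  using assms
proof (induction S arbitrary: c rule: finite_induct)
  case empty then show ?case by simp
next
  case (insert m0 S)
  have H: "c m0 * chr m0 (x,\<theta>) + (\<Sum>m\<in>S. c m * chr m (x,\<theta>)) = 0" for \<theta>
    using insert.prems insert.hyps by simp
  have Z: "\<forall>m\<in>S. c m * (chr m (x,\<phi>) - chr m0 (x,\<phi>)) = 0" for \<phi>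
  proof (rule insert.IH, rule allI)
    fix \<theta>
    have a: "c m0 * chr m0 (x,\<theta>) * chr m0 (x,\<phi>) + (\<Sum>m\<in>S. c m * chr m (x,\<theta>) * chr m (x,\<phi>)) = 0"
      using H[of "\<theta> + \<phi>"] by (simp add: chr_theta_add mult_ac)
    have b: "c m0 * chr m0 (x,\<theta>) * chr m0 (x,\<phi>) + (\<Sum>m\<in>S. c m * chr m (x,\<theta>) * chr m0 (x,\<phi>)) = 0"
      using arg_cong[OF H[of \<theta>], of "\<lambda>z. z * chr m0 (x,\<phi>)"] by (simp add: distrib_right sum_distrib_right)
    have "(\<Sum>m\<in>S. c m * (chr m (x,\<phi>) - chr m0 (x,\<phi>)) * chr m (x,\<theta>)) =
          (\<Sum>m\<in>S. c m * chr m (x,\<theta>) * chr m (x,\<phi>)) - (\<Sum>m\<in>S. c m * chr m (x,\<theta>) * chr m0 (x,\<phi>))"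
      by (simp add: sum_subtractf[symmetric] algebra_simps)
    also have "\<dots> = 0" using a b by (simp add: eq_neg_iff_add_eq_0[symmetric] algebra_simps)
    finally show "(\<Sum>m\<in>S. c m * (chr m (x,\<phi>) - chr m0 (x,\<phi>)) * chr m (x,\<theta>)) = 0" .
  qed
  have cS: "\<forall>m\<in>S. c m = 0"
  proof
    fix m assume "m \<in> S"
    then have "m \<noteq> m0" using insert.hyps by auto
    then obtain \<phi> where "chr m (x,\<phi>) \<noteq> chr m0 (x,\<phi>)" using chr_sep by blast
    then show "c m = 0" using Z[of \<phi>] \<open>m \<in> S\<close> by auto
  qed
  then have "c m0 * chr m0 (x,0) = 0" using H[of 0] by simp
  then have "c m0 = 0" using chr_nz by auto
  then show ?case using cS by simp
qed

lemma gsum_unique: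
  fixes S1 S2 :: "(int^'n::finite) set"
  assumes "finite S1" "finite S2" "\<forall>\<theta>. gsum chr S1 c1 (x,\<theta>) = gsum chr S2 c2 (x,\<theta>)"
  shows "gsum \<psi> S1 c1 = gsum \<psi> S2 c2"
proof -
  let ?U = "S1 \<union> S2"
  define d where "d m = (if m \<in> S1 then c1 m else 0) - (if m \<in> S2 then c2 m else 0)" for m
  have fU: "finite ?U" using assms by simp
  have "\<forall>\<theta>. (\<Sum>m\<in>?U. d m * chr m (x,\<theta>)) = 0"
  proof
    fix \<theta>
    have "(\<Sum>m\<in>?U. d m * chr m (x,\<theta>)) = gsum chr S1 c1 (x,\<theta>) - gsum chr S2 c2 (x,\<theta>)"
      using fU by (simp add: d_def gsum_extend[of ?U] left_diff_distrib sum_subtractf)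
    then show "(\<Sum>m\<in>?U. d m * chr m (x,\<theta>)) = 0" using assms(3) by simp
  qed
  from fourier_unique[OF fU this] have d0: "\<forall>m\<in>?U. d m = 0" .
  show ?thesis
  proof
    fix p
    have "gsum \<psi> S1 c1 p - gsum \<psi> S2 c2 p = (\<Sum>m\<in>?U. d m * \<psi> m p)"
      using fU by (simp add: d_def gsum_extend[of ?U] left_diff_distrib sum_subtractf)
    also have "\<dots> = 0" using d0 by simp
    finally show "gsum \<psi> S1 c1 p = gsum \<psi> S2 c2 p" by simp
  qed
qed



lemma expiX_add:
  assumes "f \<in> alg_gen (range chr)" "h \<in> alg_gen (range chr)"
  shows "expiX y (\<lambda>p. f p + h p) = (\<lambda>p. expiX y f p + expiX y h p)"
proof -
  obtain S1 c1 S2 c2 where "finite S1" "f = gsum chr S1 c1" "finite S2" "h = gsum chr S2 c2"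
    using alg_rep[OF assms(1)] alg_rep[OF assms(2)] by blast
  then show ?thesis
    by (simp add: gsum_add expiX_gsum_eq)
qed

lemma expiX_mult:
  assumes "f \<in> alg_gen (range chr)" "h \<in> alg_gen (range chr)"
  shows "expiX y (\<lambda>p. f p * h p) = (\<lambda>p. expiX y f p * expiX y h p)"
proof -
  obtain S1 c1 S2 c2 where "finite S1" "f = gsum chr S1 c1" "finite S2" "h = gsum chr S2 c2"
    using alg_rep[OF assms(1)] alg_rep[OF assms(2)] by blast
  then show ?thesis
    by (simp add: gsum_mult[OF _ _ chr_add] gsum_mult[OF _ _ monom_add] expiX_gsum_eq)
qed

lemma expiX_smult:
  assumes "f \<in> alg_gen (range chr)"
  shows "expiX y (\<lambda>p. c * f p) = (\<lambda>p. c * expiX y f p)"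
proof -
  obtain S1 c1 where "finite S1" "f = gsum chr S1 c1"
    using alg_rep[OF assms(1)] by blast
  then show ?thesis
    by (simp add: gsum_smult expiX_gsum_eq)
qed

lemma chr_gsum: "chr m = gsum chr {m} (\<lambda>_. 1)"
  by (simp add: gsum_def)

lemma one_gsum: "(\<lambda>_. 1) = gsum chr {0} (\<lambda>_. 1)"
  by (simp add: gsum_def chr_zero)

lemma expiX_chr: "expiX y (chr m) = monom y m"
proof -
  have "expiX y (gsum chr {m} (\<lambda>_. 1)) = gsum (monom y) {m} (\<lambda>_. 1)" by (rule expiX_gsum_eq) simp
  then show ?thesis by (simp add: gsum_def)
qed

lemma expiX_one: "expiX y (\<lambda>_. 1) = (\<lambda>_. 1)"
proof -
  have "expiX y (gsum chr {0} (\<lambda>_. 1)) = gsum (monom y) {0} (\<lambda>_. 1)" by (rule expiX_gsum_eq) simp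
  then show ?thesis by (simp add: gsum_def monom_zero chr_zero)
qed

lemma expiX_summable:
  assumes "f \<in> alg_gen (range chr)"
  shows "summable (expiX_term y f p)"
proof -
  obtain S1 c1 where "finite S1" "f = gsum chr S1 c1"
    using alg_rep[OF assms(1)] by blast
  then show ?thesis using expiX_gsum[of S1 y c1 p] by (auto simp: sums_iff)
qed

lemma image_expiX: "expiX y ` alg_gen (range chr) = alg_gen (range (monom y))"
proof
  show "expiX y ` alg_gen (range chr) \<subseteq> alg_gen (range (monom y))"
  proof
    fix g assume "g \<in> expiX y ` alg_gen (range chr)"
    then obtain f where f: "f \<in> alg_gen (range chr)" "g = expiX y f" by blast
    obtain S1 c1 where "finite S1" "f = gsum chr S1 c1"
      using alg_rep[OF f(1)] by blast
    then show "g \<in> alg_gen (range (monom y))"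
      using f by (simp add: expiX_gsum_eq gsum_in_alg)
  qed
next
  show "alg_gen (range (monom y)) \<subseteq> expiX y ` alg_gen (range chr)"
  proof
    fix g assume "g \<in> alg_gen (range (monom y))"
    then show "g \<in> expiX y ` alg_gen (range chr)"
    proof (induction rule: alg_gen.induct)
      case (gen f)
      then obtain m where "f = monom y m" by auto
      then show ?case using expiX_chr[of y m]
        by (intro rev_image_eqI[of "chr m"]) (auto intro: alg_gen.gen)
    next
      case one
      then show ?case using expiX_one[of y] by (intro rev_image_eqI[of "\<lambda>_. 1"]) (auto intro: alg_gen.one)
    next
      case (add f h)
      then obtain f' h' where "f' \<in> alg_gen (range chr)" "f = expiX y f'" "h' \<in> alg_gen (range chr)" "h = expiX y h'" by blast
      then show ?case using expiX_add[of f' h' y] alg_gen.add[of f' _ h']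
        by (intro rev_image_eqI[of "\<lambda>p. f' p + h' p"]) auto
    next
      case (smult f c)
      then obtain f' where "f' \<in> alg_gen (range chr)" "f = expiX y f'" by blast
      then show ?case using expiX_smult[of f' y c] alg_gen.smult[of f' _ c]
        by (intro rev_image_eqI[of "\<lambda>p. c * f' p"]) auto
    next
      case (mult f h)
      then obtain f' h' where "f' \<in> alg_gen (range chr)" "f = expiX y f'" "h' \<in> alg_gen (range chr)" "h = expiX y h'" by blast
      then show ?case using expiX_mult[of f' h' y] alg_gen.mult[of f' _ h']
        by (intro rev_image_eqI[of "\<lambda>p. f' p * h' p"]) auto
    qed
  qed
qed

lemma expiX_inj:
  assumes "f \<in> alg_gen (range chr)" "h \<in> alg_gen (range chr)"
    and "\<forall>\<theta>. expiX y f (x0,\<theta>) = expiX y h (x0,\<theta>)"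
  shows "f = h"
proof -
  obtain S1 c1 S2 c2 where s: "finite S1" "f = gsum chr S1 c1" "finite S2" "h = gsum chr S2 c2"
    using alg_rep[OF assms(1)] alg_rep[OF assms(2)] by blast
  define E where "E m = (exp (of_real (sy y m x0)) :: complex)" for m
  have Enz: "E m \<noteq> 0" for m by (simp add: E_def)
  have mg: "gsum (monom y) S c (x0,\<theta>) = gsum chr S (\<lambda>m. c m * E m) (x0,\<theta>)" for S c \<theta>
    by (simp add: gsum_def monom_eq E_def sy_def mult_ac)
  have "\<forall>\<theta>. gsum chr S1 (\<lambda>m. c1 m * E m) (x0,\<theta>) = gsum chr S2 (\<lambda>m. c2 m * E m) (x0,\<theta>)"
    using assms(3) s by (simp add: expiX_gsum_eq mg)
  from gsum_unique[OF s(1) s(3) this, of "\<lambda>m p. chr m p / E m"]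
  have "gsum (\<lambda>m p. chr m p / E m) S1 (\<lambda>m. c1 m * E m) = gsum (\<lambda>m p. chr m p / E m) S2 (\<lambda>m. c2 m * E m)" .
  moreover have "gsum (\<lambda>m p. chr m p / E m) S (\<lambda>m. c m * E m) = gsum chr S c" for S c
    using Enz by (simp add: gsum_def)
  ultimately show ?thesis using s by simp
qed



theorem mainTheorem6:
  fixes nu :: "nat \<Rightarrow> real^'n" and lam :: "nat \<Rightarrow> real" and d :: nat
    and g :: "real^'n \<Rightarrow> real" and y :: "real^'n \<Rightarrow> real^'n"
  assumes "delzant nu lam d"
    and "symplectic_potential nu lam d g"
    and "\<forall>x\<in>interior (polyP nu lam d). (g has_derivative (\<lambda>h. y x \<bullet> h)) (at x)"
  defines "D \<equiv> interior (polyP nu lam d) \<times> (UNIV :: (real^'n) set)"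
  shows "(\<forall>m. \<forall>p\<in>D. summable (expiX_term y (chr m) p) \<and>
              expiX y (chr m) p = monom y m p)
       \<and> (\<forall>f\<in>alg_gen (range chr). \<forall>p\<in>D. summable (expiX_term y f p))
       \<and> bij_betw (\<lambda>f. restr D (expiX y f)) (alg_gen (range chr))
                  (restr D ` alg_gen (range (monom y)))
       \<and> (\<forall>f\<in>alg_gen (range chr). \<forall>h\<in>alg_gen (range chr).
             restr D (expiX y (\<lambda>p. f p + h p)) = (\<lambda>p. restr D (expiX y f) p + restr D (expiX y h) p)
           \<and> restr D (expiX y (\<lambda>p. f p * h p)) = (\<lambda>p. restr D (expiX y f) p * restr D (expiX y h) p))
       \<and> (\<forall>f\<in>alg_gen (range chr). \<forall>c.
             restr D (expiX y (\<lambda>p. c * f p)) = (\<lambda>p. c * restr D (expiX y f) p))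
       \<and> restr D (expiX y (\<lambda>_. 1)) = restr D (\<lambda>_. 1)
       \<and> (\<forall>m. restr D (expiX y (chr m)) = restr D (monom y m))"
proof -
  have cg: "chr m \<in> alg_gen (range chr)" for m by (rule alg_gen.gen) simp
  obtain x0 where x0: "x0 \<in> interior (polyP nu lam d)"
    using assms(1) unfolding delzant_def by blast
  have xD: "(x0, \<theta>) \<in> D" for \<theta> using x0 by (simp add: D_def)
  have inj: "inj_on (\<lambda>f. restr D (expiX y f)) (alg_gen (range chr))"
  proof (rule inj_onI)
    fix f h assume fh: "f \<in> alg_gen (range chr)" "h \<in> alg_gen (range chr)"
      and eq: "restr D (expiX y f) = restr D (expiX y h)"
    have "\<forall>\<theta>. expiX y f (x0,\<theta>) = expiX y h (x0,\<theta>)"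
    proof
      fix \<theta>
      show "expiX y f (x0,\<theta>) = expiX y h (x0,\<theta>)"
        using fun_cong[OF eq, of "(x0,\<theta>)"] xD[of \<theta>] by (simp add: restr_def)
    qed
    then show "f = h" using expiX_inj[OF fh] by blast
  qed
  have img: "(\<lambda>f. restr D (expiX y f)) ` alg_gen (range chr) = restr D ` alg_gen (range (monom y))"
    using image_expiX[of y] by (simp add: image_image[symmetric, of "restr D" "expiX y"])
  show ?thesis
    using inj img
    by (auto simp: bij_betw_def expiX_summable cg expiX_chr expiX_add expiX_mult expiX_smult expiX_one
        restr_def fun_eq_iff)
qed


end
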